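(* Let $G$ be a connected graph with $|V(G)| \ge 3$ and $\det(G) = 1$. Then $\det'(G) = 2$ if $G$ is edge-flip-invariant, and $\det'(G) = 1$ otherwise.
   Context: $G$ is edge-flip-invariant if for every edge $\{u,v\}\in E(G)$ there is an automorphism $\phi$ of $G$ with $\phi(u)=v$ and $\phi(v)=u$. A vertex subset $S$ of $G$ is a vertex determining set if the only automorphism of $G$ fixing every vertex of $S$ is the identity; the determining number $\det(G)$ is the minimum size of a vertex determining set. For a graph $G$ with at most one isolated vertex and no component isomorphic to $K_2$, an edge subset $T$ is an edge determining set if the only automorphism $\phi$ of $G$ satisfying $\{\phi(u),\phi(v)\}=\{u,v\}$ for all $\{u,v\}\in T$ is the identity; the determining index $\det'(G)$ is the minimum size of an edge determining set. *)

theory Defs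
  imports Main
begin

definition simple_graph :: "'a set \<Rightarrow> ('a \<Rightarrow> 'a \<Rightarrow> bool) \<Rightarrow> bool" where
  "simple_graph V E \<longleftrightarrow> finite V \<and> (\<forall>u v. E u v \<longrightarrow> u \<in> V \<and> v \<in> V)
     \<and> (\<forall>u v. E u v \<longrightarrow> E v u) \<and> (\<forall>u. \<not> E u u)"

definition edges :: "('a \<Rightarrow> 'a \<Rightarrow> bool) \<Rightarrow> 'a set set" where
  "edges E = {{u, v} | u v. E u v}"

definition connected_graph :: "'a set \<Rightarrow> ('a \<Rightarrow> 'a \<Rightarrow> bool) \<Rightarrow> bool" where
  "connected_graph V E \<longleftrightarrow> (\<forall>u\<in>V. \<forall>v\<in>V. E\<^sup>*\<^sup>* u v)"

text \<open>Automorphisms, represented as permutations of V that are the identity outside V.\<close>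
definition automorphisms :: "'a set \<Rightarrow> ('a \<Rightarrow> 'a \<Rightarrow> bool) \<Rightarrow> ('a \<Rightarrow> 'a) set" where
  "automorphisms V E = {\<phi>. bij_betw \<phi> V V \<and> (\<forall>x. x \<notin> V \<longrightarrow> \<phi> x = x)
      \<and> (\<forall>u\<in>V. \<forall>v\<in>V. E u v \<longleftrightarrow> E (\<phi> u) (\<phi> v))}"

definition edge_flip_invariant :: "'a set \<Rightarrow> ('a \<Rightarrow> 'a \<Rightarrow> bool) \<Rightarrow> bool" where
  "edge_flip_invariant V E \<longleftrightarrow>
     (\<forall>u v. E u v \<longrightarrow> (\<exists>\<phi>\<in>automorphisms V E. \<phi> u = v \<and> \<phi> v = u))"

definition vertex_determining_set :: "'a set \<Rightarrow> ('a \<Rightarrow> 'a \<Rightarrow> bool) \<Rightarrow> 'a set \<Rightarrow> bool" where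
  "vertex_determining_set V E S \<longleftrightarrow> S \<subseteq> V \<and>
     (\<forall>\<phi>\<in>automorphisms V E. (\<forall>x\<in>S. \<phi> x = x) \<longrightarrow> \<phi> = id)"

definition determining_number :: "'a set \<Rightarrow> ('a \<Rightarrow> 'a \<Rightarrow> bool) \<Rightarrow> nat" where
  "determining_number V E = (LEAST n. \<exists>S. vertex_determining_set V E S \<and> card S = n)"

definition edge_determining_set :: "'a set \<Rightarrow> ('a \<Rightarrow> 'a \<Rightarrow> bool) \<Rightarrow> 'a set set \<Rightarrow> bool" where
  "edge_determining_set V E T \<longleftrightarrow> T \<subseteq> edges E \<and>
     (\<forall>\<phi>\<in>automorphisms V E. (\<forall>u v. {u, v} \<in> T \<longrightarrow> {\<phi> u, \<phi> v} = {u, v}) \<longrightarrow> \<phi> = id)"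

definition determining_index :: "'a set \<Rightarrow> ('a \<Rightarrow> 'a \<Rightarrow> bool) \<Rightarrow> nat" where
  "determining_index V E = (LEAST n. \<exists>T. edge_determining_set V E T \<and> card T = n)"

end

theory Submission
  imports Defs
begin

lemma aut_bij:
  assumes "\<phi> \<in> automorphisms V E" shows "bij \<phi>"
proof -
  have b: "bij_betw \<phi> V V" and o: "\<forall>x. x \<notin> V \<longrightarrow> \<phi> x = x"
    using assms by (auto simp: automorphisms_def)
  have "bij_betw \<phi> (- V) (- V)"
    using o bij_betw_id[of "- V"] by (metis ComplD bij_betw_cong id_apply)
  hence "bij_betw \<phi> (V \<union> - V) (V \<union> - V)"
    using b by (intro bij_betw_combine) auto
  thus ?thesis by simp
qed

lemma aut_inv:
  assumes a: "\<sigma> \<in> automorphisms V E" shows "inv \<sigma> \<in> automorphisms V E"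
proof -
  have bj: "bij \<sigma>" using aut_bij[OF a] .
  have b: "bij_betw \<sigma> V V" and o: "\<forall>x. x \<notin> V \<longrightarrow> \<sigma> x = x"
    and e: "\<forall>u\<in>V. \<forall>v\<in>V. E u v \<longleftrightarrow> E (\<sigma> u) (\<sigma> v)"
    using a by (auto simp: automorphisms_def)
  have o2: "\<forall>x. x \<notin> V \<longrightarrow> inv \<sigma> x = x"
    using o bj by (metis bij_inv_eq_iff)
  have b2: "bij_betw (inv \<sigma>) V V"
    using bij_betw_inv_into_subset[OF bj _ bij_betw_imp_surj_on[OF b]] by simp
  have inV: "\<And>u. u \<in> V \<Longrightarrow> inv \<sigma> u \<in> V" using b2 bij_betwE by blast
  have "\<forall>u\<in>V. \<forall>v\<in>V. E u v \<longleftrightarrow> E (inv \<sigma> u) (inv \<sigma> v)"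
    using e inV bj by (metis bij_inv_eq_iff)
  thus ?thesis using o2 b2 by (auto simp: automorphisms_def)
qed

lemma aut_comp:
  assumes a: "\<sigma> \<in> automorphisms V E" and b: "\<tau> \<in> automorphisms V E"
  shows "\<sigma> \<circ> \<tau> \<in> automorphisms V E"
proof -
  have a1: "bij_betw \<sigma> V V" and a2: "\<forall>x. x \<notin> V \<longrightarrow> \<sigma> x = x"
    and a3: "\<forall>u\<in>V. \<forall>v\<in>V. E u v \<longleftrightarrow> E (\<sigma> u) (\<sigma> v)"
    using a by (auto simp: automorphisms_def)
  have b1: "bij_betw \<tau> V V" and b2: "\<forall>x. x \<notin> V \<longrightarrow> \<tau> x = x"
    and b3: "\<forall>u\<in>V. \<forall>v\<in>V. E u v \<longleftrightarrow> E (\<tau> u) (\<tau> v)"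
    using b by (auto simp: automorphisms_def)
  have c1: "bij_betw (\<sigma> \<circ> \<tau>) V V" using b1 a1 by (rule bij_betw_trans)
  have tV: "\<And>u. u \<in> V \<Longrightarrow> \<tau> u \<in> V" using b1 bij_betwE by blast
  have c2: "\<forall>x. x \<notin> V \<longrightarrow> (\<sigma> \<circ> \<tau>) x = x" using a2 b2 by simp
  have c3: "\<forall>u\<in>V. \<forall>v\<in>V. E u v \<longleftrightarrow> E ((\<sigma> \<circ> \<tau>) u) ((\<sigma> \<circ> \<tau>) v)"
  proof (intro ballI)
    fix u v assume uv: "u \<in> V" "v \<in> V"
    have "E u v \<longleftrightarrow> E (\<tau> u) (\<tau> v)" using b3 uv by blast
    also have "\<dots> \<longleftrightarrow> E (\<sigma> (\<tau> u)) (\<sigma> (\<tau> v))" using a3 tV[OF uv(1)] tV[OF uv(2)] by blast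
    finally show "E u v \<longleftrightarrow> E ((\<sigma> \<circ> \<tau>) u) ((\<sigma> \<circ> \<tau>) v)" by simp
  qed
  show ?thesis using c1 c2 c3 unfolding automorphisms_def by blast
qed

lemma aut_id: "id \<in> automorphisms V E"
  by (auto simp: automorphisms_def)

definition triv_stab where
  "triv_stab V E w \<longleftrightarrow> w \<in> V \<and> (\<forall>\<phi>\<in>automorphisms V E. \<phi> w = w \<longrightarrow> \<phi> = id)"

lemma triv_stab_flip:
  assumes t: "triv_stab V E w" and s: "\<sigma> \<in> automorphisms V E" and sw: "\<sigma> w = x" and xV: "x \<in> V"
  shows "triv_stab V E x"
  unfolding triv_stab_def
proof (intro conjI ballI impI)
  show "x \<in> V" by fact
  fix \<phi> assume p: "\<phi> \<in> automorphisms V E" and px: "\<phi> x = x"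
  have bj: "bij \<sigma>" using aut_bij[OF s] .
  let ?\<psi> = "inv \<sigma> \<circ> \<phi> \<circ> \<sigma>"
  have "?\<psi> \<in> automorphisms V E" using aut_comp[OF aut_comp[OF aut_inv[OF s] p] s] .
  moreover have "?\<psi> w = w" using sw px bj by (simp add: inv_f_eq bij_is_inj)
  ultimately have "?\<psi> = id" using t unfolding triv_stab_def by blast
  show "\<phi> = id"
  proof (rule ext)
    fix y
    have "?\<psi> (inv \<sigma> y) = inv \<sigma> y" using \<open>?\<psi> = id\<close> by simp
    hence "inv \<sigma> (\<phi> y) = inv \<sigma> y" using bj by (simp add: bij_is_surj surj_f_inv_f)
    hence "\<phi> y = y" using bij_imp_bij_inv[OF bj] by (meson bij_is_inj injD)
    thus "\<phi> y = id y" by simp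
  qed
qed

lemma det_num_facts:
  assumes g: "simple_graph V E" and d: "determining_number V E = 1"
  shows "\<exists>w. triv_stab V E w" and "\<exists>\<phi>\<in>automorphisms V E. \<phi> \<noteq> id"
proof -
  have "vertex_determining_set V E V"
    unfolding vertex_determining_set_def automorphisms_def
    by (auto intro!: ext)
  hence ex: "\<exists>n S. vertex_determining_set V E S \<and> card S = n" by blast
  from LeastI_ex[OF ex] d obtain S where S: "vertex_determining_set V E S" "card S = 1"
    unfolding determining_number_def by auto
  then obtain w where "S = {w}" by (meson card_1_singletonE)
  thus "\<exists>w. triv_stab V E w" using S unfolding triv_stab_def vertex_determining_set_def by auto
  show "\<exists>\<phi>\<in>automorphisms V E. \<phi> \<noteq> id"
  proof (rule ccontr)
    assume "\<not> ?thesis"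
    hence "vertex_determining_set V E {}" unfolding vertex_determining_set_def by auto
    hence "determining_number V E \<le> 0" unfolding determining_number_def
      by (metis (mono_tags, lifting) Least_le card.empty)
    thus False using d by simp
  qed
qed

lemma edges_finite:
  assumes g: "simple_graph V E" shows "finite (edges E)"
proof -
  have "edges E \<subseteq> Pow V" using g unfolding simple_graph_def edges_def by auto
  moreover have "finite V" using g unfolding simple_graph_def by auto
  ultimately show ?thesis by (meson finite_Pow_iff finite_subset)
qed

lemma not_eds_empty:
  assumes "\<exists>\<phi>\<in>automorphisms V E. \<phi> \<noteq> id"
  shows "\<not> edge_determining_set V E {}"
  using assms unfolding edge_determining_set_def by auto

lemma small_card:
  assumes g: "simple_graph V E" and "edge_determining_set V E T" and "card T = 0"
  shows "T = {}"
  using assms edges_finite[OF g] unfolding edge_determining_set_def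
  by (meson card_0_eq finite_subset)

lemma flip_not_eds:
  assumes g: "simple_graph V E" and efi: "edge_flip_invariant V E"
    and "edge_determining_set V E T" and "card T = 1"
  shows False
proof -
  obtain e where T: "T = {e}" using assms(4) by (meson card_1_singletonE)
  hence "e \<in> edges E" using assms(3) unfolding edge_determining_set_def by auto
  then obtain u v where e: "e = {u,v}" "E u v" unfolding edges_def by auto
  then obtain \<phi> where p: "\<phi> \<in> automorphisms V E" "\<phi> u = v" "\<phi> v = u"
    using efi unfolding edge_flip_invariant_def by blast
  have "u \<noteq> v" using e g unfolding simple_graph_def by auto
  hence "\<phi> \<noteq> id" using p by auto
  moreover have "\<forall>a b. {a, b} \<in> T \<longrightarrow> {\<phi> a, \<phi> b} = {a, b}"
    using T e p by (auto simp: doubleton_eq_iff)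
  ultimately show False using assms(3) p(1) unfolding edge_determining_set_def by blast
qed

lemma two_eds:
  assumes g: "simple_graph V E" and c: "connected_graph V E" and V3: "card V \<ge> 3"
    and t: "triv_stab V E w"
  shows "\<exists>T. edge_determining_set V E T \<and> card T = 2"
proof -
  have wV: "w \<in> V" using t unfolding triv_stab_def by auto
  have fin: "finite V" using g unfolding simple_graph_def by auto
  obtain z where zV: "z \<in> V" "z \<noteq> w"
  proof -
    have "card (V - {w}) \<ge> 2" using V3 wV fin by simp
    hence "V - {w} \<noteq> {}" by (intro notI) simp
    thus ?thesis using that by auto
  qed
  have "E\<^sup>*\<^sup>* w z" using c wV zV unfolding connected_graph_def by auto
  then obtain x where wx: "E w x" using zV(2) by (metis converse_rtranclpE)
  have xw: "x \<noteq> w" using wx g unfolding simple_graph_def by auto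
  obtain z' where z': "z' \<in> V" "z' \<noteq> w" "z' \<noteq> x"
  proof -
    have xV: "x \<in> V" using wx g unfolding simple_graph_def by auto
    have "card (V - {w, x}) = card V - card {w, x}"
      using wV xV fin by (intro card_Diff_subset) auto
    moreover have "card {w, x} = 2" using xw by simp
    ultimately have "card (V - {w, x}) \<ge> 1" using V3 by simp
    hence "V - {w,x} \<noteq> {}" by (intro notI) simp
    thus ?thesis using that by auto
  qed
  have reach: "E\<^sup>*\<^sup>* w q \<Longrightarrow> q \<in> {w, x} \<or> (\<exists>y. y \<notin> {w, x} \<and> (E w y \<or> E x y))" for q
  proof (induction rule: rtranclp_induct)
    case base then show ?case by simp
  next
    case (step q q')
    then show ?case by (cases "q' \<in> {w,x}") auto
  qed
  have "E\<^sup>*\<^sup>* w z'" using c wV z' unfolding connected_graph_def by auto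
  from reach[OF this] z' obtain y where y: "y \<noteq> w" "y \<noteq> x" "E w y \<or> E x y" by auto
  have key: "\<phi> = id" if p: "\<phi> \<in> automorphisms V E" and p1: "{\<phi> w, \<phi> x} = {w, x}"
    and p2: "(\<phi> w = x \<and> \<phi> x = w) \<Longrightarrow> False" for \<phi>
  proof (cases "\<phi> w = w")
    case True then show ?thesis using t p unfolding triv_stab_def by blast
  next
    case False
    then have "\<phi> w = x \<and> \<phi> x = w" using p1 by (auto simp: doubleton_eq_iff)
    then show ?thesis using p2 by blast
  qed
  show ?thesis
  proof (cases "E w y")
    case True
    let ?T = "{{w,x},{w,y}}"
    have "edge_determining_set V E ?T"
      unfolding edge_determining_set_def
    proof (intro conjI ballI impI)
      show "?T \<subseteq> edges E" using True wx unfolding edges_def by auto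
      fix \<phi> assume p: "\<phi> \<in> automorphisms V E"
        and h: "\<forall>u v. {u, v} \<in> ?T \<longrightarrow> {\<phi> u, \<phi> v} = {u, v}"
      have h1: "{\<phi> w, \<phi> x} = {w, x}" using h by auto
      have h2: "{\<phi> w, \<phi> y} = {w, y}" using h by auto
      show "\<phi> = id" using key[OF p h1] h2 xw y by (auto simp: doubleton_eq_iff)
    qed
    moreover have "card ?T = 2" using xw y by (auto simp: doubleton_eq_iff)
    ultimately show ?thesis by blast
  next
    case False
    hence Exy: "E x y" using y by auto
    let ?T = "{{w,x},{x,y}}"
    have "edge_determining_set V E ?T"
      unfolding edge_determining_set_def
    proof (intro conjI ballI impI)
      show "?T \<subseteq> edges E" using Exy wx unfolding edges_def by auto
      fix \<phi> assume p: "\<phi> \<in> automorphisms V E"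
        and h: "\<forall>u v. {u, v} \<in> ?T \<longrightarrow> {\<phi> u, \<phi> v} = {u, v}"
      have h1: "{\<phi> w, \<phi> x} = {w, x}" using h by auto
      have h2: "{\<phi> x, \<phi> y} = {x, y}" using h by auto
      show "\<phi> = id" using key[OF p h1] h2 xw y by (auto simp: doubleton_eq_iff)
    qed
    moreover have "card ?T = 2" using xw y by (auto simp: doubleton_eq_iff)
    ultimately show ?thesis by blast
  qed
qed

lemma one_eds:
  assumes g: "simple_graph V E" and c: "connected_graph V E"
    and t: "triv_stab V E w" and nefi: "\<not> edge_flip_invariant V E"
  shows "edge_determining_set V E {{a,b}} \<or> (\<exists>a b. edge_determining_set V E {{a,b}})"
proof -
  have "\<exists>a b. E a b \<and> triv_stab V E a \<and> \<not>(\<exists>\<phi>\<in>automorphisms V E. \<phi> a = b \<and> \<phi> b = a)"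
  proof (rule ccontr)
    assume na: "\<not> ?thesis"
    have wV: "w \<in> V" using t unfolding triv_stab_def by auto
    have "triv_stab V E q" if "E\<^sup>*\<^sup>* w q" for q
      using that
    proof (induction rule: rtranclp_induct)
      case base then show ?case using t .
    next
      case (step q q')
      have "q' \<in> V" using step(2) g unfolding simple_graph_def by auto
      from na step(2) step(3) obtain \<phi> where "\<phi> \<in> automorphisms V E" "\<phi> q = q'"
        by blast
      then show ?case using triv_stab_flip[OF step(3) _ _ \<open>q' \<in> V\<close>] by blast
    qed
    hence all: "\<forall>q\<in>V. triv_stab V E q" using c wV unfolding connected_graph_def by auto
    have "edge_flip_invariant V E" unfolding edge_flip_invariant_def
    proof (intro allI impI)
      fix u v assume "E u v"
      moreover have "u \<in> V" using \<open>E u v\<close> g unfolding simple_graph_def by auto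
      ultimately show "\<exists>\<phi>\<in>automorphisms V E. \<phi> u = v \<and> \<phi> v = u" using na all by blast
    qed
    thus False using nefi by blast
  qed
  then obtain a b where ab: "E a b" "triv_stab V E a"
    "\<not>(\<exists>\<phi>\<in>automorphisms V E. \<phi> a = b \<and> \<phi> b = a)" by blast
  have "edge_determining_set V E {{a,b}}"
    unfolding edge_determining_set_def
  proof (intro conjI ballI impI)
    show "{{a,b}} \<subseteq> edges E" using ab unfolding edges_def by auto
    fix \<phi> assume p: "\<phi> \<in> automorphisms V E"
      and h: "\<forall>u v. {u, v} \<in> {{a,b}} \<longrightarrow> {\<phi> u, \<phi> v} = {u, v}"
    have "{\<phi> a, \<phi> b} = {a, b}" using h by auto
    then show "\<phi> = id" using ab p unfolding triv_stab_def by (auto simp: doubleton_eq_iff)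
  qed
  thus ?thesis by blast
qed

theorem corollary2:
  fixes V :: "'a set" and E :: "'a \<Rightarrow> 'a \<Rightarrow> bool"
  assumes "simple_graph V E"
    and "connected_graph V E"
    and "card V \<ge> 3"
    and "determining_number V E = 1"
  shows "determining_index V E = (if edge_flip_invariant V E then 2 else 1)"
proof -
  obtain w where t: "triv_stab V E w" using det_num_facts[OF assms(1,4)] by blast
  have nt: "\<not> edge_determining_set V E {}" using not_eds_empty det_num_facts[OF assms(1,4)] by blast
  have no0: "\<not> edge_determining_set V E T" if "card T = 0" for T
    using small_card[OF assms(1) _ that] nt by blast
  show ?thesis
  proof (cases "edge_flip_invariant V E")
    case True
    have "determining_index V E = 2" unfolding determining_index_def
    proof (rule Least_equality)
      show "\<exists>T. edge_determining_set V E T \<and> card T = 2" using two_eds[OF assms(1-3) t] .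
      fix n assume "\<exists>T. edge_determining_set V E T \<and> card T = n"
      then obtain T where "edge_determining_set V E T" "card T = n" by blast
      thus "2 \<le> n" using no0 flip_not_eds[OF assms(1) True]
        by (metis One_nat_def less_2_cases not_le)
    qed
    thus ?thesis using True by simp
  next
    case False
    obtain a b where "edge_determining_set V E {{a,b}}"
      using one_eds[OF assms(1,2) t False] by blast
    have "determining_index V E = 1" unfolding determining_index_def
    proof (rule Least_equality)
      show "\<exists>T. edge_determining_set V E T \<and> card T = 1" using \<open>edge_determining_set V E {{a,b}}\<close> by force
      fix n assume "\<exists>T. edge_determining_set V E T \<and> card T = n"
      then obtain T where "edge_determining_set V E T" "card T = n" by blast
      thus "1 \<le> n" using no0 by (metis less_one not_le)
    qed
    thus ?thesis using False by simp
  qed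
qed

end
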